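(* For every integer $n\ge 1$, let $M_T(n)$ denote the maximum modulus of an independence root over all trees on $n$ vertices. Then $$M_T(n)\ge \begin{cases} 2^{\frac{n-1}{2}} & \text{if } n \text{ is odd},\\ 2^{\frac{n-6}{2}} & \text{if } n \text{ is even}.\end{cases}$$
   Context: For a finite simple graph $G$, the independence polynomial is $i(G,x)=\sum_{k=0}^{\alpha(G)} i_k x^k$, where $i_k$ is the number of independent sets of size $k$ in $G$ (with $i_0=1$) and $\alpha(G)$ is the independence number. Its complex roots are the independence roots of $G$. *)

theory Defs
  imports Complex_Main "HOL-Computational_Algebra.Polynomial"
begin

text \<open>Finite simple graphs on the vertex set {0..<n}, given by a symmetric,
  irreflexive adjacency relation E whose edges lie inside {0..<n}.
  Every finite graph on n vertices is isomorphic to one of these.\<close>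

definition simple_graph_on :: "nat \<Rightarrow> (nat \<Rightarrow> nat \<Rightarrow> bool) \<Rightarrow> bool" where
  "simple_graph_on n E \<longleftrightarrow>
     (\<forall>x y. E x y \<longrightarrow> E y x) \<and> (\<forall>x. \<not> E x x) \<and> (\<forall>x y. E x y \<longrightarrow> x < n \<and> y < n)"

definition connected_on :: "nat \<Rightarrow> (nat \<Rightarrow> nat \<Rightarrow> bool) \<Rightarrow> bool" where
  "connected_on n E \<longleftrightarrow> (\<forall>x<n. \<forall>y<n. E\<^sup>*\<^sup>* x y)"

definition is_cycle :: "(nat \<Rightarrow> nat \<Rightarrow> bool) \<Rightarrow> nat list \<Rightarrow> bool" where
  "is_cycle E vs \<longleftrightarrow> length vs \<ge> 3 \<and> distinct vs \<and>
     (\<forall>i < length vs. E (vs ! i) (vs ! ((i + 1) mod length vs)))"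

definition acyclic_graph :: "(nat \<Rightarrow> nat \<Rightarrow> bool) \<Rightarrow> bool" where
  "acyclic_graph E \<longleftrightarrow> \<not> (\<exists>vs. is_cycle E vs)"

definition is_tree :: "nat \<Rightarrow> (nat \<Rightarrow> nat \<Rightarrow> bool) \<Rightarrow> bool" where
  "is_tree n E \<longleftrightarrow> simple_graph_on n E \<and> connected_on n E \<and> acyclic_graph E"

definition indep_set :: "nat \<Rightarrow> (nat \<Rightarrow> nat \<Rightarrow> bool) \<Rightarrow> nat set \<Rightarrow> bool" where
  "indep_set n E S \<longleftrightarrow> S \<subseteq> {0..<n} \<and> (\<forall>x\<in>S. \<forall>y\<in>S. \<not> E x y)"

definition ind_poly :: "nat \<Rightarrow> (nat \<Rightarrow> nat \<Rightarrow> bool) \<Rightarrow> complex poly" where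
  "ind_poly n E = (\<Sum>S\<in>{S. indep_set n E S}. monom 1 (card S))"

definition M_T :: "nat \<Rightarrow> real" where
  "M_T n = Max {cmod z | z E. is_tree n E \<and> poly (ind_poly n E) z = 0}"

end

theory Submission
  imports Defs
begin

definition F :: "nat \<Rightarrow> (nat \<Rightarrow> nat \<Rightarrow> bool) \<Rightarrow> (nat set \<Rightarrow> bool) \<Rightarrow> real \<Rightarrow> real" where
  "F n H P x = (\<Sum>S\<in>{S. S \<subseteq> {0..<n} \<and> (\<forall>a\<in>S. \<forall>b\<in>S. \<not> H a b) \<and> P S}. x ^ card S)"

lemma F_0: "F 0 H P x = (if P {} then 1 else 0)"
proof -
  have "{S. S \<subseteq> {0..<0::nat} \<and> (\<forall>a\<in>S. \<forall>b\<in>S. \<not> H a b) \<and> P S} = (if P {} then {{}} else {})"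
    by auto
  then show ?thesis by (simp add: F_def)
qed

lemma F_Suc: "F (Suc n) H P x = F n H P x +
   x * F n H (\<lambda>S. (\<forall>a\<in>S. \<not> H a n \<and> \<not> H n a) \<and> \<not> H n n \<and> P (insert n S)) x"
proof -
  define U1 where "U1 = {S. S \<subseteq> {0..<n} \<and> (\<forall>a\<in>S. \<forall>b\<in>S. \<not> H a b) \<and> P S}"
  define U2 where "U2 = {S. S \<subseteq> {0..<n} \<and> (\<forall>a\<in>S. \<forall>b\<in>S. \<not> H a b) \<and>
     ((\<forall>a\<in>S. \<not> H a n \<and> \<not> H n a) \<and> \<not> H n n \<and> P (insert n S))}"
  have fin1: "finite U1" unfolding U1_def by (rule finite_subset[of _ "Pow {0..<n}"]) auto
  have fin2: "finite U2" unfolding U2_def by (rule finite_subset[of _ "Pow {0..<n}"]) auto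
  have eq: "{S. S \<subseteq> {0..<Suc n} \<and> (\<forall>a\<in>S. \<forall>b\<in>S. \<not> H a b) \<and> P S} = U1 \<union> insert n ` U2"
  proof (rule set_eqI, rule iffI)
    fix S assume S: "S \<in> {S. S \<subseteq> {0..<Suc n} \<and> (\<forall>a\<in>S. \<forall>b\<in>S. \<not> H a b) \<and> P S}"
    show "S \<in> U1 \<union> insert n ` U2"
    proof (cases "n \<in> S")
      case True
      have "S - {n} \<in> U2" using S True unfolding U2_def
        by (auto simp: insert_absorb)
      moreover have "S = insert n (S - {n})" using True by auto
      ultimately show ?thesis by blast
    next
      case False
      then have "S \<in> U1" using S unfolding U1_def
        by auto (metis atLeastLessThan_iff less_SucE subsetD)
      then show ?thesis by blast
    qed
  next
    fix S assume "S \<in> U1 \<union> insert n ` U2"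
    then show "S \<in> {S. S \<subseteq> {0..<Suc n} \<and> (\<forall>a\<in>S. \<forall>b\<in>S. \<not> H a b) \<and> P S}"
      unfolding U1_def U2_def by auto
  qed
  have disj: "U1 \<inter> insert n ` U2 = {}" unfolding U1_def U2_def by auto
  have inj: "inj_on (insert n) U2"
    unfolding U2_def inj_on_def by auto (metis insert_ident atLeastLessThan_iff less_irrefl subsetD)+
  have card: "\<And>S. S \<in> U2 \<Longrightarrow> card (insert n S) = Suc (card S)"
  proof -
    fix S assume "S \<in> U2"
    then have "S \<subseteq> {0..<n}" unfolding U2_def by auto
    then have "finite S" "n \<notin> S" using finite_subset by auto
    then show "card (insert n S) = Suc (card S)" by simp
  qed
  have "F (Suc n) H P x = sum (\<lambda>S. x ^ card S) U1 + sum (\<lambda>S. x ^ card S) (insert n ` U2)"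
    unfolding F_def eq using fin1 fin2 disj by (simp add: sum.union_disjoint)
  also have "sum (\<lambda>S. x ^ card S) (insert n ` U2) = sum (\<lambda>S. x ^ card (insert n S)) U2"
    using inj by (simp add: sum.reindex)
  also have "\<dots> = sum (\<lambda>S. x * x ^ card S) U2" using card by (intro sum.cong) auto
  also have "\<dots> = x * sum (\<lambda>S. x ^ card S) U2" by (simp add: sum_distrib_left)
  finally show ?thesis unfolding F_def U1_def U2_def by simp
qed

lemma F_cong: "(\<And>S. S \<subseteq> {0..<n} \<Longrightarrow> P S = Q S) \<Longrightarrow> F n H P x = F n H Q x"
  unfolding F_def by (rule sum.cong) auto

lemma F_False[simp]: "F n H (\<lambda>S. False) x = 0"
  unfolding F_def by simp

lemma F_notin: "F n H (\<lambda>S. n \<notin> S \<and> P S) x = F n H P x"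
  by (rule F_cong) auto

definition ptree :: "(nat \<Rightarrow> nat) \<Rightarrow> nat \<Rightarrow> nat \<Rightarrow> bool" where
  "ptree par x y \<longleftrightarrow> (0 < y \<and> x = par y) \<or> (0 < x \<and> y = par x)"

lemma F_Suc_ptree:
  assumes par: "\<And>y. 0 < y \<Longrightarrow> par y < y" and n: "0 < n"
  shows "F (Suc n) (ptree par) P x = F n (ptree par) P x +
   x * F n (ptree par) (\<lambda>S. par n \<notin> S \<and> P (insert n S)) x"
proof -
  have "F n (ptree par) (\<lambda>S. (\<forall>a\<in>S. \<not> ptree par a n \<and> \<not> ptree par n a) \<and> \<not> ptree par n n \<and> P (insert n S)) x
      = F n (ptree par) (\<lambda>S. par n \<notin> S \<and> P (insert n S)) x"
  proof (rule F_cong)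
    fix S assume S: "S \<subseteq> {0..<n}"
    have nn: "\<not> ptree par n n" using par n unfolding ptree_def by (metis less_irrefl)
    have "(\<forall>a\<in>S. \<not> ptree par a n \<and> \<not> ptree par n a) \<longleftrightarrow> par n \<notin> S"
    proof
      assume "\<forall>a\<in>S. \<not> ptree par a n \<and> \<not> ptree par n a"
      then show "par n \<notin> S" using n unfolding ptree_def by auto
    next
      assume a: "par n \<notin> S"
      show "\<forall>a\<in>S. \<not> ptree par a n \<and> \<not> ptree par n a"
      proof
        fix a assume aS: "a \<in> S"
        then have "a < n" using S by auto
        then show "\<not> ptree par a n \<and> \<not> ptree par n a"
          using a aS par unfolding ptree_def by (metis less_asym)
      qed
    qed
    then show "((\<forall>a\<in>S. \<not> ptree par a n \<and> \<not> ptree par n a) \<and> \<not> ptree par n n \<and> P (insert n S)) =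
         (par n \<notin> S \<and> P (insert n S))" using nn by simp
  qed
  then show ?thesis by (simp add: F_Suc)
qed

definition restr :: "nat \<Rightarrow> (nat \<Rightarrow> nat \<Rightarrow> bool) \<Rightarrow> nat \<Rightarrow> nat \<Rightarrow> bool" where
  "restr n H x y \<longleftrightarrow> H x y \<and> x < n \<and> y < n"

lemma rtranclp_sym:
  assumes sym: "\<And>x y. E x y \<Longrightarrow> E y x" and "E\<^sup>*\<^sup>* a b"
  shows "E\<^sup>*\<^sup>* b a"
  using assms(2)
proof (induction rule: rtranclp_induct)
  case base then show ?case by simp
next
  case (step y z)
  then show ?case using sym by (meson converse_rtranclp_into_rtranclp)
qed

lemma ptree_is_tree:
  assumes par: "\<And>y. 0 < y \<Longrightarrow> par y < y" and n: "1 \<le> n"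
  shows "is_tree n (restr n (ptree par))"
proof -
  let ?E = "restr n (ptree par)"
  have sym: "\<And>x y. ?E x y \<Longrightarrow> ?E y x" unfolding restr_def ptree_def by auto
  have irr: "\<not> ?E x x" for x
  proof
    assume "?E x x"
    then have "0 < x" "x = par x" unfolding restr_def ptree_def by auto
    moreover have "par x < x" using par[of x] \<open>0 < x\<close> by blast
    ultimately show False by linarith
  qed
  have sg: "simple_graph_on n ?E" unfolding simple_graph_on_def
  proof (intro conjI allI impI)
    fix x y assume "?E x y" then show "?E y x" by (rule sym)
  next
    fix x show "\<not> ?E x x" by (rule irr)
  next
    fix x y assume "?E x y" then show "x < n" "y < n" unfolding restr_def by auto
  qed
  have to0: "x < n \<Longrightarrow> ?E\<^sup>*\<^sup>* x 0" for x
  proof (induction x rule: less_induct)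
    case (less x)
    show ?case
    proof (cases "x = 0")
      case True then show ?thesis by simp
    next
      case False
      then have "par x < x" using par by auto
      then have "?E\<^sup>*\<^sup>* (par x) 0" using less.IH[of "par x"] less.prems by linarith
      moreover have "?E x (par x)" using False \<open>par x < x\<close> less.prems
        unfolding restr_def ptree_def by auto
      ultimately show ?thesis by (rule converse_rtranclp_into_rtranclp[rotated])
    qed
  qed
  have conn: "connected_on n ?E" unfolding connected_on_def
  proof (intro allI impI)
    fix x y assume "x < n" "y < n"
    have "?E\<^sup>*\<^sup>* x 0" "?E\<^sup>*\<^sup>* y 0" using to0 \<open>x < n\<close> \<open>y < n\<close> by blast+
    then have "?E\<^sup>*\<^sup>* x 0" "?E\<^sup>*\<^sup>* 0 y" using rtranclp_sym[of ?E, OF sym] by blast+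
    then show "?E\<^sup>*\<^sup>* x y" by (rule rtranclp_trans)
  qed
  have uniq: "w = par v" if "?E v w" "w < v" for v w
  proof -
    have "(0 < w \<and> v = par w) \<or> (0 < v \<and> w = par v)" using that(1) unfolding restr_def ptree_def by simp
    moreover have "\<not> (0 < w \<and> v = par w)" using par[of w] that(2) by auto
    ultimately show ?thesis by blast
  qed
  have acyc: "acyclic_graph ?E" unfolding acyclic_graph_def
  proof
    assume "\<exists>vs. is_cycle ?E vs"
    then obtain vs where L: "length vs \<ge> 3" and d: "distinct vs"
      and e: "\<forall>i < length vs. ?E (vs ! i) (vs ! ((i + 1) mod length vs))"
      unfolding is_cycle_def by blast
    define L where "L = length vs"
    have "vs \<noteq> []" using L by auto
    define v where "v = Max (set vs)"
    have "v \<in> set vs" unfolding v_def using \<open>vs \<noteq> []\<close> by simp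
    then obtain i where i: "i < L" "vs ! i = v" unfolding L_def by (auto simp: in_set_conv_nth)
    have vmax: "\<And>j. j < L \<Longrightarrow> vs ! j \<le> v" unfolding v_def L_def by simp
    define j where "j = (i + 1) mod L"
    define p where "p = (if i = 0 then L - 1 else i - 1)"
    have L3: "3 \<le> L" using L L_def by simp
    have jv: "j = (if i + 1 = L then 0 else i + 1)" unfolding j_def using i(1) by auto
    have jL: "j < L" and pL: "p < L" using jv L3 i(1) unfolding p_def by auto
    have pi: "(p + 1) mod L = i"
      unfolding p_def using L3 i(1) by auto
    have jp: "j \<noteq> p" using jv L3 i(1) unfolding p_def by auto
    have ji: "j \<noteq> i" using jv L3 i(1) by auto
    have pi2: "p \<noteq> i" using L3 i(1) unfolding p_def by auto
    have e1: "?E v (vs ! j)" using e i unfolding j_def L_def by auto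
    have "?E (vs ! p) (vs ! ((p + 1) mod L))" using e pL unfolding L_def by blast
    then have e2: "?E (vs ! p) v" using pi i(2) by simp
    have "vs ! j \<noteq> vs ! i" using nth_eq_iff_index_eq[OF d, of j i] ji jL i(1) unfolding L_def by simp
    then have "vs ! j \<noteq> v" using i(2) by simp
    then have "vs ! j < v" using vmax jL by fastforce
    then have a: "vs ! j = par v" using uniq e1 by blast
    have "vs ! p \<noteq> vs ! i" using nth_eq_iff_index_eq[OF d, of p i] pi2 pL i(1) unfolding L_def by simp
    then have "vs ! p \<noteq> v" using i(2) by simp
    then have "vs ! p < v" using vmax pL by fastforce
    then have b: "vs ! p = par v" using uniq sym e2 by blast
    have "vs ! j \<noteq> vs ! p" using nth_eq_iff_index_eq[OF d, of j p] jp jL pL unfolding L_def by simp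
    then show False using a b by simp
  qed
  show ?thesis unfolding is_tree_def using sg conn acyc by blast
qed

lemma poly_ind: "poly (ind_poly n E) z = (\<Sum>S\<in>{S. indep_set n E S}. z ^ card S)"
  unfolding ind_poly_def poly_sum poly_monom by simp

lemma indep_restr: "indep_set n (restr n H) S \<longleftrightarrow> S \<subseteq> {0..<n} \<and> (\<forall>a\<in>S. \<forall>b\<in>S. \<not> H a b)"
proof
  assume a: "indep_set n (restr n H) S"
  then have s: "S \<subseteq> {0..<n}" unfolding indep_set_def by blast
  have "\<forall>a\<in>S. \<forall>b\<in>S. \<not> H a b"
  proof (intro ballI)
    fix a b assume "a \<in> S" "b \<in> S"
    moreover then have "a < n" "b < n" using s by auto
    ultimately show "\<not> H a b" using a unfolding indep_set_def restr_def by blast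
  qed
  then show "S \<subseteq> {0..<n} \<and> (\<forall>a\<in>S. \<forall>b\<in>S. \<not> H a b)" using s by blast
next
  assume "S \<subseteq> {0..<n} \<and> (\<forall>a\<in>S. \<forall>b\<in>S. \<not> H a b)"
  then show "indep_set n (restr n H) S" unfolding indep_set_def restr_def by blast
qed

lemma poly_restr: "poly (ind_poly n (restr n H)) (complex_of_real x) = complex_of_real (F n H (\<lambda>_. True) x)"
proof -
  have "poly (ind_poly n (restr n H)) (complex_of_real x) = (\<Sum>S\<in>{S. indep_set n (restr n H) S}. complex_of_real x ^ card S)"
    by (rule poly_ind)
  also have "{S. indep_set n (restr n H) S} = {S. S \<subseteq> {0..<n} \<and> (\<forall>a\<in>S. \<forall>b\<in>S. \<not> H a b) \<and> True}"
    by (simp only: indep_restr simp_thms)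
  also have "(\<Sum>S\<in>{S. S \<subseteq> {0..<n} \<and> (\<forall>a\<in>S. \<forall>b\<in>S. \<not> H a b) \<and> True}. complex_of_real x ^ card S)
     = complex_of_real (F n H (\<lambda>_. True) x)"
    unfolding F_def of_real_sum of_real_power by (rule refl)
  finally show ?thesis .
qed

lemma indep_finite: "finite {S. indep_set n E S}"
  by (rule finite_subset[of _ "Pow {0..<n}"]) (auto simp: indep_set_def)

lemma ind_poly_nonzero: "ind_poly n E \<noteq> 0"
proof
  assume "ind_poly n E = 0"
  then have "poly (ind_poly n E) 0 = 0" by simp
  moreover have "poly (ind_poly n E) 0 = (\<Sum>S\<in>{S. indep_set n E S}. if S = {} then 1 else 0)"
    unfolding poly_ind
  proof (rule sum.cong)
    fix S assume "S \<in> {S. indep_set n E S}"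
    then have "finite S" unfolding indep_set_def using finite_subset by auto
    then show "(0::complex) ^ card S = (if S = {} then 1 else 0)" by (simp add: power_0_left)
  qed simp
  moreover have "{} \<in> {S. indep_set n E S}" by (simp add: indep_set_def)
  ultimately show False using indep_finite[of n E] by (simp add: sum.delta')
qed

lemma graphs_finite: "finite {E. simple_graph_on n E}"
proof (rule finite_imageD)
  let ?f = "\<lambda>E. {(x, y). E x y}"
  show "finite (?f ` {E. simple_graph_on n E})"
    by (rule finite_subset[of _ "Pow ({0..<n} \<times> {0..<n})"]) (auto simp: simple_graph_on_def)
  show "inj_on ?f {E. simple_graph_on n E}"
    unfolding inj_on_def by (auto simp: fun_eq_iff set_eq_iff)
qed

lemma M_T_ge:
  assumes "is_tree n E" "poly (ind_poly n E) z = 0"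
  shows "cmod z \<le> M_T n"
proof -
  let ?A = "{cmod z | z E. is_tree n E \<and> poly (ind_poly n E) z = 0}"
  have "?A \<subseteq> cmod ` (\<Union>E\<in>{E. simple_graph_on n E}. {z. poly (ind_poly n E) z = 0})"
    unfolding is_tree_def by blast
  moreover have "finite (\<Union>E\<in>{E. simple_graph_on n E}. {z. poly (ind_poly n E) z = 0})"
    using graphs_finite poly_roots_finite[OF ind_poly_nonzero] by blast
  ultimately have "finite ?A" using finite_subset by blast
  moreover have "cmod z \<in> ?A" using assms by blast
  ultimately show ?thesis unfolding M_T_def by (rule Max_ge)
qed

lemma leg:
  assumes par: "\<And>y. 0 < y \<Longrightarrow> par y < y" and n: "0 < n" and p1: "par n = 0" and p2: "par (Suc n) = n"
  shows "F (Suc (Suc n)) (ptree par) (\<lambda>S. 0 \<in> S) x = (1 + x) * F n (ptree par) (\<lambda>S. 0 \<in> S) x"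
    and "F (Suc (Suc n)) (ptree par) (\<lambda>S. 0 \<notin> S) x = (1 + 2 * x) * F n (ptree par) (\<lambda>S. 0 \<notin> S) x"
proof -
  have s1: "F (Suc (Suc n)) (ptree par) P x = F (Suc n) (ptree par) P x +
     x * F (Suc n) (ptree par) (\<lambda>S. n \<notin> S \<and> P (insert (Suc n) S)) x" for P
    using F_Suc_ptree[OF par, of "Suc n" P x] p2 by simp
  have s2: "F (Suc n) (ptree par) P x = F n (ptree par) P x +
     x * F n (ptree par) (\<lambda>S. 0 \<notin> S \<and> P (insert n S)) x" for P
    using F_Suc_ptree[OF par n, of P x] p1 by simp
  have n0: "n \<noteq> 0" using n by simp
  have a: "F (Suc n) (ptree par) (\<lambda>S. 0 \<in> S) x = F n (ptree par) (\<lambda>S. 0 \<in> S) x"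
    using s2[of "\<lambda>S. 0 \<in> S"] n0 by simp
  have b: "F (Suc n) (ptree par) (\<lambda>S. n \<notin> S \<and> 0 \<in> S) x = F n (ptree par) (\<lambda>S. 0 \<in> S) x"
    using s2[of "\<lambda>S. n \<notin> S \<and> 0 \<in> S"] n0 by (simp add: F_notin)
  show "F (Suc (Suc n)) (ptree par) (\<lambda>S. 0 \<in> S) x = (1 + x) * F n (ptree par) (\<lambda>S. 0 \<in> S) x"
    using s1[of "\<lambda>S. 0 \<in> S"] a b by (simp add: algebra_simps)
  have c: "F (Suc n) (ptree par) (\<lambda>S. 0 \<notin> S) x = (1 + x) * F n (ptree par) (\<lambda>S. 0 \<notin> S) x"
    using s2[of "\<lambda>S. 0 \<notin> S"] n0 by (simp add: algebra_simps)
  have d: "F (Suc n) (ptree par) (\<lambda>S. n \<notin> S \<and> 0 \<notin> S) x = F n (ptree par) (\<lambda>S. 0 \<notin> S) x"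
    using s2[of "\<lambda>S. n \<notin> S \<and> 0 \<notin> S"] n0 by (simp add: F_notin)
  show "F (Suc (Suc n)) (ptree par) (\<lambda>S. 0 \<notin> S) x = (1 + 2 * x) * F n (ptree par) (\<lambda>S. 0 \<notin> S) x"
    using s1[of "\<lambda>S. 0 \<notin> S"] c d n0 by (simp add: algebra_simps)
qed

lemma F_split: "F n H (\<lambda>_. True) x = F n H (\<lambda>S. 0 \<in> S) x + F n H (\<lambda>S. 0 \<notin> S) x"
proof -
  let ?U = "{S. S \<subseteq> {0..<n} \<and> (\<forall>a\<in>S. \<forall>b\<in>S. \<not> H a b)}"
  have fin: "finite ?U" by (rule finite_subset[of _ "Pow {0..<n}"]) auto
  have "F n H (\<lambda>_. True) x = (\<Sum>S\<in>?U. x ^ card S)" unfolding F_def by simp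
  also have "\<dots> = (\<Sum>S\<in>?U \<inter> {S. 0 \<in> S}. x ^ card S) + (\<Sum>S\<in>?U - {S. 0 \<in> S}. x ^ card S)"
    using fin by (rule sum.Int_Diff)
  also have "?U \<inter> {S. 0 \<in> S} = {S. S \<subseteq> {0..<n} \<and> (\<forall>a\<in>S. \<forall>b\<in>S. \<not> H a b) \<and> 0 \<in> S}" by blast
  also have "?U - {S. 0 \<in> S} = {S. S \<subseteq> {0..<n} \<and> (\<forall>a\<in>S. \<forall>b\<in>S. \<not> H a b) \<and> 0 \<notin> S}" by blast
  finally show ?thesis unfolding F_def .
qed

definition par_odd :: "nat \<Rightarrow> nat" where "par_odd y = (if odd y then 0 else y - 1)"

lemma par_odd_lt: "0 < y \<Longrightarrow> par_odd y < y" unfolding par_odd_def by auto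

lemma odd_closed:
  "F (2 * m + 1) (ptree par_odd) (\<lambda>S. 0 \<in> S) x = x * (1 + x) ^ m \<and>
   F (2 * m + 1) (ptree par_odd) (\<lambda>S. 0 \<notin> S) x = (1 + 2 * x) ^ m"
proof (induction m)
  case 0
  show ?case by (simp add: F_Suc F_0 ptree_def)
next
  case (Suc m)
  have e: "2 * Suc m + 1 = Suc (Suc (2 * m + 1))" by simp
  have p1: "par_odd (2 * m + 1) = 0" "par_odd (Suc (2 * m + 1)) = 2 * m + 1"
    unfolding par_odd_def by auto
  have z: "0 < 2 * m + 1" by simp
  show ?case unfolding e using leg(1)[where par=par_odd and x=x, OF par_odd_lt z p1]
      leg(2)[where par=par_odd and x=x, OF par_odd_lt z p1] Suc.IH
    by (simp add: ac_simps)
qed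

definition par6 :: "nat \<Rightarrow> nat" where
  "par6 y = (if y = 1 then 0 else if y \<le> 3 then 1 else if y \<le> 5 then 2 else if even y then 0 else y - 1)"

lemma par6_lt: "0 < y \<Longrightarrow> par6 y < y" unfolding par6_def by auto

lemma base6:
  "F 6 (ptree par6) (\<lambda>S. 0 \<in> S) x = x * (1 + x) * (1 + 3 * x + x ^ 2) \<and>
   F 6 (ptree par6) (\<lambda>S. 0 \<notin> S) x = (1 + x) * (1 + 4 * x + 2 * x ^ 2)"
proof -
  have six: "(6::nat) = Suc (Suc (Suc (Suc (Suc (Suc 0)))))" by simp
  show ?thesis unfolding six
    by (simp add: F_Suc F_0 ptree_def par6_def insert_commute algebra_simps power2_eq_square)
qed

lemma even_closed:
  "F (2 * k + 6) (ptree par6) (\<lambda>S. 0 \<in> S) x = x * (1 + x) * (1 + 3 * x + x ^ 2) * (1 + x) ^ k \<and>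
   F (2 * k + 6) (ptree par6) (\<lambda>S. 0 \<notin> S) x = (1 + x) * (1 + 4 * x + 2 * x ^ 2) * (1 + 2 * x) ^ k"
proof (induction k)
  case 0
  show ?case using base6 by simp
next
  case (Suc k)
  have e: "2 * Suc k + 6 = Suc (Suc (2 * k + 6))" by simp
  have p1: "par6 (2 * k + 6) = 0" "par6 (Suc (2 * k + 6)) = 2 * k + 6"
    unfolding par6_def by auto
  have z: "0 < 2 * k + 6" by simp
  show ?case unfolding e using leg(1)[where par=par6 and x=x, OF par6_lt z p1]
      leg(2)[where par=par6 and x=x, OF par6_lt z p1] Suc.IH
    by (simp add: ac_simps)
qed

lemma bern: "(s::real) \<ge> 1 \<Longrightarrow> s ^ m * (s - real m) \<le> s * (s - 1) ^ m"
proof (induction m)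
  case 0 then show ?case by simp
next
  case (Suc m)
  have s1: "s - 1 \<ge> 0" using Suc.prems by simp
  have "s ^ Suc m * (s - real (Suc m)) = (s - 1) * (s ^ m * (s - real m)) - real m * s ^ m"
    by (simp add: algebra_simps)
  also have "\<dots> \<le> (s - 1) * (s ^ m * (s - real m))"
    using Suc.prems by simp
  also have "\<dots> \<le> (s - 1) * (s * (s - 1) ^ m)"
    using Suc s1 by (intro mult_left_mono) auto
  also have "\<dots> = s * (s - 1) ^ Suc m" by (simp add: algebra_simps)
  finally show ?case .
qed

lemma IVT0:
  fixes f :: "real \<Rightarrow> real"
  assumes "continuous_on {a..b} f" "a \<le> b" "f a * f b \<le> 0"
  shows "\<exists>x. a \<le> x \<and> x \<le> b \<and> f x = 0"
proof (cases "f a \<le> 0 \<and> 0 \<le> f b")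
  case True then show ?thesis using IVT'[of f a 0 b] assms by auto
next
  case False
  then have "f b \<le> 0 \<and> 0 \<le> f a" using assms(3) by (auto simp: mult_le_0_iff)
  then show ?thesis using IVT2'[of f b 0 a] assms by auto
qed

lemma neg_pow: "(1 - (s::real)) ^ m = (-1) ^ m * (s - 1) ^ m"
proof -
  have "1 - s = (-1) * (s - 1)" by simp
  then show ?thesis by (simp only: power_mult_distrib)
qed

lemma neg_pow2: "(1 - 2 * (s::real)) ^ m = (-1) ^ m * (2 * s - 1) ^ m"
proof -
  have "1 - 2 * s = (-1) * (2 * s - 1)" by simp
  then show ?thesis by (simp only: power_mult_distrib)
qed

lemma odd_root: "\<exists>x. x \<le> - (2 ^ m) \<and> F (2 * m + 1) (ptree par_odd) (\<lambda>_. True) x = 0"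
proof -
  define f where "f x = x * (1 + x) ^ m + (1 + 2 * x) ^ m" for x :: real
  have fF: "F (2 * m + 1) (ptree par_odd) (\<lambda>_. True) x = f x" for x
    using F_split odd_closed unfolding f_def by simp
  define g where "g s = (2 * s - 1) ^ m - s * (s - 1) ^ m" for s :: real
  have fg: "f (- s) = (-1) ^ m * g s" for s
    unfolding f_def g_def
    using neg_pow[of s m] neg_pow2[of s m] by (simp add: algebra_simps)
  define t :: real where "t = 2 ^ m"
  have t1: "t \<ge> 1" unfolding t_def by simp
  have gt: "g t \<ge> 0"
  proof -
    have "t * (t - 1) ^ m = (2 * t - 2) ^ m"
    proof -
      have "(2 * t - 2) ^ m = (2 * (t - 1)) ^ m" by (simp add: algebra_simps)
      also have "\<dots> = 2 ^ m * (t - 1) ^ m" by (simp only: power_mult_distrib)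
      finally show ?thesis unfolding t_def by simp
    qed
    also have "\<dots> \<le> (2 * t - 1) ^ m" using t1 by (intro power_mono) auto
    finally show ?thesis unfolding g_def by simp
  qed
  define s0 :: real where "s0 = 2 ^ m + m + 1"
  have s01: "s0 \<ge> 1" unfolding s0_def by simp
  have gs: "g s0 \<le> 0"
  proof -
    have "(2 * s0 - 1) ^ m \<le> (2 * s0) ^ m" using s01 by (intro power_mono) auto
    also have "\<dots> = 2 ^ m * s0 ^ m" by (simp only: power_mult_distrib)
    also have "\<dots> \<le> (s0 - m) * s0 ^ m" unfolding s0_def by (intro mult_right_mono) auto
    also have "\<dots> \<le> s0 * (s0 - 1) ^ m" using bern[OF s01, of m] by (simp add: mult.commute)
    finally show ?thesis unfolding g_def by simp
  qed
  have ts: "t \<le> s0" unfolding t_def s0_def by simp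
  have cont: "continuous_on {- s0 .. - t} f" unfolding f_def by (intro continuous_intros)
  have "f (- s0) * f (- t) = ((-1) ^ m * (-1) ^ m) * (g s0 * g t)" unfolding fg by (simp add: algebra_simps)
  also have "(-1::real) ^ m * (-1) ^ m = 1" by (simp add: power_mult_distrib[symmetric])
  finally have "f (- s0) * f (- t) \<le> 0" using gt gs by (simp add: mult_nonpos_nonneg)
  then obtain x where "- s0 \<le> x" "x \<le> - t" "f x = 0" using IVT0[OF cont] ts by auto
  then show ?thesis using fF unfolding t_def by auto
qed

lemma even_root: "\<exists>x. x \<le> - (2 ^ k) \<and> F (2 * k + 6) (ptree par6) (\<lambda>_. True) x = 0"
proof -
  define f where "f x = x * (1 + x) * (1 + 3 * x + x ^ 2) * (1 + x) ^ k + (1 + x) * (1 + 4 * x + 2 * x ^ 2) * (1 + 2 * x) ^ k" for x :: real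
  have fF: "F (2 * k + 6) (ptree par6) (\<lambda>_. True) x = f x" for x
    using F_split even_closed unfolding f_def by simp
  define g where "g s = s * (s ^ 2 - 3 * s + 1) * (s - 1) ^ k - (2 * s ^ 2 - 4 * s + 1) * (2 * s - 1) ^ k" for s :: real
  have fg: "f (- s) = (-1) ^ k * (s - 1) * g s" for s
    unfolding f_def g_def
    using neg_pow[of s k] neg_pow2[of s k] by (simp add: algebra_simps power2_eq_square)
  define t :: real where "t = 2 ^ k"
  have t1: "t \<ge> 1" unfolding t_def by simp
  have gt: "g t \<le> 0"
  proof -
    define P where "P = t * (t - 1) ^ k"
    define Q where "Q = (2 * t - 1) ^ k"
    define c where "c = t ^ 2 - 3 * t + 1"
    define d where "d = 2 * t ^ 2 - 4 * t + 1"
    have PQ: "P \<le> Q"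
    proof -
      have "P = (2 * t - 2) ^ k"
      proof -
        have "(2 * t - 2) ^ k = (2 * (t - 1)) ^ k" by (simp add: algebra_simps)
        also have "\<dots> = 2 ^ k * (t - 1) ^ k" by (simp only: power_mult_distrib)
        finally show ?thesis unfolding t_def P_def by simp
      qed
      also have "\<dots> \<le> Q" unfolding Q_def using t1 by (intro power_mono) auto
      finally show ?thesis .
    qed
    have P0: "P \<ge> 0" unfolding P_def using t1 by simp
    have cd: "c \<le> d"
    proof -
      have "t * (t - 1) \<ge> 0" using t1 by simp
      then show ?thesis unfolding c_def d_def by (simp add: algebra_simps power2_eq_square)
    qed
    have "c * P \<le> d * P" using cd P0 by (rule mult_right_mono)
    also have "d * P \<le> d * Q"
    proof (cases "k = 0")
      case True
      then have "P = Q" unfolding P_def Q_def t_def by simp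
      then show ?thesis by simp
    next
      case False
      then have "t \<ge> 2" unfolding t_def
        by (metis One_nat_def Suc_leI neq0_conv power_increasing power_one_right one_le_numeral self_le_power)
      then have "t * (t - 2) \<ge> 0" by simp
      then have "d \<ge> 0" unfolding d_def by (simp add: algebra_simps power2_eq_square)
      then show ?thesis using PQ by (rule mult_left_mono[rotated])
    qed
    finally have "c * P \<le> d * Q" .
    moreover have "g t = c * P - d * Q" unfolding g_def c_def P_def d_def Q_def by (simp add: algebra_simps)
    ultimately show ?thesis by simp
  qed
  define u :: real where "u = 2 ^ k"
  have u1: "u \<ge> 1" unfolding u_def by simp
  define s0 :: real where "s0 = 4 * u + k + 3"
  have s07: "s0 \<ge> 7" unfolding s0_def using u1 by simp
  have gs: "g s0 \<ge> 0"
  proof -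
    have a1: "0 \<le> 2 * s0 ^ 2 - 4 * s0 + 1"
    proof -
      have "s0 * (s0 - 2) \<ge> 0" using s07 by simp
      then show ?thesis by (simp add: algebra_simps power2_eq_square)
    qed
    have "(2 * s0 ^ 2 - 4 * s0 + 1) * (2 * s0 - 1) ^ k \<le> (2 * s0 ^ 2) * (2 * s0) ^ k"
      using a1 s07 by (intro mult_mono power_mono) auto
    also have "\<dots> = 2 * u * s0 ^ 2 * s0 ^ k" unfolding u_def by (simp add: power_mult_distrib)
    also have "\<dots> \<le> (s0 ^ 2 - 3 * s0 + 1) * (s0 - k) * s0 ^ k"
    proof (rule mult_right_mono)
      have c2: "s0 ^ 2 / 2 \<le> s0 ^ 2 - 3 * s0 + 1"
      proof -
        have "s0 * (s0 - 6) \<ge> 0" using s07 by simp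
        then show ?thesis by (simp add: algebra_simps power2_eq_square)
      qed
      have "2 * u * s0 ^ 2 = (s0 ^ 2 / 2) * (4 * u)" by simp
      also have "\<dots> \<le> (s0 ^ 2 - 3 * s0 + 1) * (s0 - k)"
        using c2 u1 unfolding s0_def by (intro mult_mono) auto
      finally show "2 * u * s0 ^ 2 \<le> (s0 ^ 2 - 3 * s0 + 1) * (s0 - k)" .
      show "0 \<le> s0 ^ k" using s07 by simp
    qed
    also have "\<dots> = (s0 ^ 2 - 3 * s0 + 1) * (s0 ^ k * (s0 - k))" by (simp add: algebra_simps)
    also have "\<dots> \<le> (s0 ^ 2 - 3 * s0 + 1) * (s0 * (s0 - 1) ^ k)"
    proof (rule mult_left_mono)
      show "s0 ^ k * (s0 - real k) \<le> s0 * (s0 - 1) ^ k" using bern s07 by simp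
      have "s0 * (s0 - 6) \<ge> 0" using s07 by simp
      then have "s0 * s0 \<ge> 6 * s0" by (simp add: algebra_simps)
      then show "0 \<le> s0 ^ 2 - 3 * s0 + 1" using s07 unfolding power2_eq_square by linarith
    qed
    finally show ?thesis unfolding g_def by (simp add: algebra_simps)
  qed
  have ts: "t \<le> s0" unfolding t_def s0_def u_def by simp
  have cont: "continuous_on {- s0 .. - t} f" unfolding f_def by (intro continuous_intros)
  have "f (- s0) * f (- t) = ((-1) ^ k * (-1) ^ k) * (((s0 - 1) * (t - 1)) * (g s0 * g t))"
    unfolding fg by (simp add: algebra_simps)
  also have "(-1::real) ^ k * (-1) ^ k = 1" by (simp add: power_mult_distrib[symmetric])
  finally have e: "f (- s0) * f (- t) = ((s0 - 1) * (t - 1)) * (g s0 * g t)" by simp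
  have "(s0 - 1) * (t - 1) \<ge> 0" using s07 t1 by simp
  moreover have "g s0 * g t \<le> 0" using gs gt by (simp add: mult_nonneg_nonpos)
  ultimately have "f (- s0) * f (- t) \<le> 0" unfolding e by (simp add: mult_nonneg_nonpos)
  then obtain x where "- s0 \<le> x" "x \<le> - t" "f x = 0" using IVT0[OF cont] ts by auto
  then show ?thesis using fF unfolding t_def by auto
qed

lemma root_to_M:
  assumes par: "\<And>y. 0 < y \<Longrightarrow> par y < y" and n: "1 \<le> n"
    and r: "F n (ptree par) (\<lambda>_. True) x = 0"
  shows "\<bar>x\<bar> \<le> M_T n"
proof -
  have "poly (ind_poly n (restr n (ptree par))) (complex_of_real x) = 0"
    unfolding poly_restr r by simp
  then have "cmod (complex_of_real x) \<le> M_T n" using M_T_ge[OF ptree_is_tree[OF par n]] by blast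
  then show ?thesis by simp
qed

theorem proposition3:
  fixes n :: nat
  assumes "n \<ge> 1"
  shows "M_T n \<ge> (if odd n then 2 powr ((real n - 1) / 2) else 2 powr ((real n - 6) / 2))"
proof (cases "odd n")
  case True
  then obtain m where m: "n = 2 * m + 1" by (metis oddE)
  obtain x where x: "x \<le> - (2 ^ m)" "F (2 * m + 1) (ptree par_odd) (\<lambda>_. True) x = 0"
    using odd_root by blast
  have "\<bar>x\<bar> \<le> M_T n" using root_to_M[OF par_odd_lt assms] x(2) m by simp
  moreover have "2 powr ((real n - 1) / 2) = 2 ^ m" unfolding m by (simp add: powr_realpow)
  moreover have "(2::real) ^ m \<le> \<bar>x\<bar>" using x(1) by simp
  ultimately show ?thesis using True by simp
next
  case False
  then obtain h where h: "n = 2 * h" by (metis evenE)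
  show ?thesis
  proof (cases "h \<ge> 3")
    case True
    define k where "k = h - 3"
    have nk: "n = 2 * k + 6" unfolding k_def using h True by simp
    obtain x where x: "x \<le> - (2 ^ k)" "F (2 * k + 6) (ptree par6) (\<lambda>_. True) x = 0"
      using even_root by blast
    have "\<bar>x\<bar> \<le> M_T n" using root_to_M[OF par6_lt assms] x(2) nk by simp
    moreover have "2 powr ((real n - 6) / 2) = 2 ^ k" unfolding nk by (simp add: powr_realpow)
    moreover have "(2::real) ^ k \<le> \<bar>x\<bar>" using x(1) by simp
    ultimately show ?thesis using False by simp
  next
    case False
    then have "h = 1 \<or> h = 2" using h assms by auto
    then show ?thesis
    proof
      assume "h = 1"
      then have n2: "n = 2" using h by simp
      have r: "F 2 (ptree par_odd) (\<lambda>_. True) (- 1 / 2) = 0"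
        by (simp add: numeral_2_eq_2 F_Suc F_0 ptree_def par_odd_def)
      have o: "(1::nat) \<le> 2" by simp
      have "\<bar>- 1 / 2\<bar> \<le> M_T 2" by (rule root_to_M[OF par_odd_lt o r])
      moreover have "2 powr ((real 2 - 6) / 2) = (1 / 4 :: real)" by (simp add: powr_minus powr_numeral)
      ultimately show ?thesis using n2 by simp
    next
      assume "h = 2"
      then have n4: "n = 4" using h by simp
      have r: "F 4 (ptree par_odd) (\<lambda>_. True) (- 1) = 0"
        by (simp add: eval_nat_numeral F_Suc F_0 ptree_def par_odd_def)
      have o: "(1::nat) \<le> 4" by simp
      have "\<bar>- 1\<bar> \<le> M_T 4" by (rule root_to_M[OF par_odd_lt o r])
      moreover have "2 powr ((real 4 - 6) / 2) = (1 / 2 :: real)" by (simp add: powr_minus)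
      ultimately show ?thesis using n4 by simp
    qed
  qed
qed


end
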